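(* Let $D$ be a finite set, $k\ge 2$, and let $P:D^k\to\{0,1\}$ be a $k$-ary predicate with $P^{-1}(1)\neq\emptyset$. Suppose there exists $z\in D$ such that for all $x_1,\dots,x_{k-1}\in D$ and all permutations $\sigma$ of the $k$ coordinates, $P(\sigma(x_1,\dots,x_{k-1},z))=0$. Then for every weighted directed $k$-uniform hypergraph $H=(V,E,w)$, every $0<\varepsilon<1$, and every $\varepsilon$-$P$-sparsifier $H_\varepsilon=(V,E_\varepsilon,w_\varepsilon)$ of $H$, we have $|E_\varepsilon|=\Omega(|E|)$, with the implied constant independent of $H$ and $\varepsilon$.
   Context: $\sigma(\cdot)$ permutes the entries of a tuple. A weighted directed $k$-uniform hypergraph $H=(V,E,w)$ has $E$ a set of ordered $k$-tuples of distinct vertices and $w:E\to\mathbb{R}_{>0}$. For $A:V\to D$, $\mathrm{Val}_{H,P}(A)=\sum_{e\in E}w(e)P(A(e))$ with $A$ applied entrywise. An $\varepsilon$-$P$-sparsifier of $H$ is $H_\varepsilon=(V,E_\varepsilon,w_\varepsilon)$ with $E_\varepsilon\subseteq E$, $w_\varepsilon:E_\varepsilon\to\mathbb{R}_{>0}$, such that for every $A:V\to D$, $(1-\varepsilon)\mathrm{Val}_{H,P}(A)\le\mathrm{Val}_{H_\varepsilon,P}(A)\le(1+\varepsilon)\mathrm{Val}_{H,P}(A)$. *)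

theory Defs
  imports Complex_Main "HOL-Combinatorics.Permutations"
begin

text \<open>Tuples are lists; a k-tuple over D is a list of length k with entries in D.
  Applying a permutation sigma of the k coordinates to a tuple t gives
  the tuple whose i-th entry is t ! (sigma i).\<close>

definition permute_tuple :: "(nat \<Rightarrow> nat) \<Rightarrow> 'a list \<Rightarrow> 'a list" where
  "permute_tuple \<sigma> t = map (\<lambda>i. t ! \<sigma> i) [0..<length t]"

definition wdk_hypergraph :: "nat \<Rightarrow> 'v set \<Rightarrow> 'v list set \<Rightarrow> ('v list \<Rightarrow> real) \<Rightarrow> bool" where
  "wdk_hypergraph k V E w \<longleftrightarrow> finite V \<and>
     (\<forall>e\<in>E. length e = k \<and> distinct e \<and> set e \<subseteq> V) \<and> (\<forall>e\<in>E. w e > 0)"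

definition Val :: "('d list \<Rightarrow> bool) \<Rightarrow> 'v list set \<Rightarrow> ('v list \<Rightarrow> real) \<Rightarrow> ('v \<Rightarrow> 'd) \<Rightarrow> real" where
  "Val P E w A = (\<Sum>e\<in>E. w e * (if P (map A e) then 1 else 0))"

definition is_sparsifier ::
  "'d set \<Rightarrow> ('d list \<Rightarrow> bool) \<Rightarrow> real \<Rightarrow> 'v set \<Rightarrow> 'v list set \<Rightarrow> ('v list \<Rightarrow> real)
     \<Rightarrow> 'v list set \<Rightarrow> ('v list \<Rightarrow> real) \<Rightarrow> bool" where
  "is_sparsifier D P \<epsilon> V E w E\<epsilon> w\<epsilon> \<longleftrightarrow> E\<epsilon> \<subseteq> E \<and> (\<forall>e\<in>E\<epsilon>. w\<epsilon> e > 0) \<and>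
     (\<forall>A. (\<forall>v\<in>V. A v \<in> D) \<longrightarrow>
        (1 - \<epsilon>) * Val P E w A \<le> Val P E\<epsilon> w\<epsilon> A \<and> Val P E\<epsilon> w\<epsilon> A \<le> (1 + \<epsilon>) * Val P E w A)"

end

theory Submission
  imports Defs "HOL-Combinatorics.Multiset_Permutations"
begin

lemma blocked:
  assumes hz: "\<forall>xs \<sigma>. length xs = k - 1 \<and> set xs \<subseteq> D \<and> \<sigma> permutes {..<k}
            \<longrightarrow> \<not> P (permute_tuple \<sigma> (xs @ [z]))"
    and len: "length y = k" and j: "j < k" and yj: "y ! j = z" and yD: "set y \<subseteq> D"
  shows "\<not> P y"
proof -
  define \<sigma> where "\<sigma> = Transposition.transpose j (k - 1)"
  have sp: "\<sigma> permutes {..<k}" unfolding \<sigma>_def using j by (intro permutes_swap_id) auto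
  have sk: "i < k \<Longrightarrow> \<sigma> i < k" for i using sp by (metis lessThan_iff permutes_in_image)
  have ss: "\<sigma> (\<sigma> i) = i" for i unfolding \<sigma>_def by simp
  define u where "u = permute_tuple \<sigma> y"
  have lu: "length u = k" unfolding u_def permute_tuple_def using len by simp
  have un: "i < k \<Longrightarrow> u ! i = y ! \<sigma> i" for i unfolding u_def permute_tuple_def using len by simp
  have ulast: "u ! (k - 1) = z" using un[of "k-1"] j yj by (simp add: \<sigma>_def)
  have ueq: "u = take (k - 1) u @ [z]"
  proof -
    have "u = take (k - 1) u @ drop (k - 1) u" by simp
    moreover have "drop (k - 1) u = [u ! (k - 1)]" using lu j
      by (metis Cons_nth_drop_Suc One_nat_def Suc_pred diff_less drop_all le_refl less_nat_zero_code
          not_gr_zero zero_less_one)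
    ultimately show ?thesis using ulast by (metis append_take_drop_id)
  qed
  have uD: "set u \<subseteq> D"
  proof
    fix x assume "x \<in> set u"
    then obtain i where "i < k" "x = u ! i" using lu by (metis in_set_conv_nth)
    then show "x \<in> D" using un sk yD len by (metis nth_mem subsetD)
  qed
  have "permute_tuple \<sigma> u = y"
    unfolding permute_tuple_def using lu len un sk ss
    by (intro nth_equalityI) auto
  moreover have "\<not> P (permute_tuple \<sigma> (take (k - 1) u @ [z]))"
    using hz[rule_format, of "take (k - 1) u" \<sigma>] lu uD sp
    using set_take_subset[of "k-1" u] by auto
  ultimately show ?thesis using ueq by simp
qed

theorem proposition17:
  fixes D :: "'d set" and P :: "'d list \<Rightarrow> bool" and k :: nat
  assumes "finite D" and "k \<ge> 2"
    and "\<exists>t. length t = k \<and> set t \<subseteq> D \<and> P t"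
    and "\<exists>z\<in>D. \<forall>xs \<sigma>. length xs = k - 1 \<and> set xs \<subseteq> D \<and> \<sigma> permutes {..<k}
            \<longrightarrow> \<not> P (permute_tuple \<sigma> (xs @ [z]))"
  shows "\<exists>c>0. \<forall>(V :: nat set) E w \<epsilon> E\<epsilon> w\<epsilon>.
           wdk_hypergraph k V E w \<and> 0 < \<epsilon> \<and> \<epsilon> < 1 \<and> is_sparsifier D P \<epsilon> V E w E\<epsilon> w\<epsilon>
           \<longrightarrow> real (card E\<epsilon>) \<ge> c * real (card E)"
proof -
  obtain t where t: "length t = k" "set t \<subseteq> D" "P t" using assms(3) by blast
  obtain z where zD: "z \<in> D" and hz: "\<forall>xs \<sigma>. length xs = k - 1 \<and> set xs \<subseteq> D \<and> \<sigma> permutes {..<k}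
            \<longrightarrow> \<not> P (permute_tuple \<sigma> (xs @ [z]))" using assms(4) by blast
  show ?thesis
  proof (intro exI[of _ "1 / fact k"] conjI allI impI)
    show "(0::real) < 1 / fact k" by simp
    fix V :: "nat set" and E w \<epsilon> E\<epsilon> w\<epsilon>
    assume H: "wdk_hypergraph k V E w \<and> 0 < \<epsilon> \<and> \<epsilon> < 1 \<and> is_sparsifier D P \<epsilon> V E w E\<epsilon> w\<epsilon>"
    have fV: "finite V" and Ee: "\<And>e. e \<in> E \<Longrightarrow> length e = k \<and> distinct e \<and> set e \<subseteq> V"
      and wpos: "\<And>e. e \<in> E \<Longrightarrow> w e > 0"
      using H unfolding wdk_hypergraph_def by auto
    have sub: "E\<epsilon> \<subseteq> E" and we: "\<And>e. e \<in> E\<epsilon> \<Longrightarrow> w\<epsilon> e > 0"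
      and sp: "\<And>A. (\<forall>v\<in>V. A v \<in> D) \<Longrightarrow> (1 - \<epsilon>) * Val P E w A \<le> Val P E\<epsilon> w\<epsilon> A"
      using H unfolding is_sparsifier_def by auto
    have fE: "finite E"
      by (rule finite_subset[OF _ finite_lists_length_eq[OF fV, of k]]) (use Ee in auto)
    have fEe: "finite E\<epsilon>" using finite_subset[OF sub fE] .
    have hit: "\<exists>e'\<in>E\<epsilon>. set e' = set e" if eE: "e \<in> E" for e
    proof (rule ccontr)
      assume none: "\<not> (\<exists>e'\<in>E\<epsilon>. set e' = set e)"
      have le: "length e = k" and de: "distinct e" using Ee[OF eE] by auto
      define A where "A v = (case map_of (zip e t) v of Some d \<Rightarrow> d | None \<Rightarrow> z)" for v
      have Ain: "A v = t ! i" if "i < k" "v = e ! i" for v i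
        using map_of_zip_nth[of e t i] that le t(1) de unfolding A_def by simp
      have Aout: "A v = z" if "v \<notin> set e" for v
      proof -
        have "map_of (zip e t) v = None" using that le t(1) by (simp add: map_of_zip_is_None)
        thus ?thesis unfolding A_def by simp
      qed
      have AD: "A v \<in> D" for v
      proof (cases "v \<in> set e")
        case True then obtain i where "i < k" "v = e ! i" using le by (metis in_set_conv_nth)
        then show ?thesis using Ain t by (metis nth_mem subsetD)
      qed (use Aout zD in auto)
      have mt: "map A e = t" using le t(1) Ain by (intro nth_equalityI) auto
      have "w e * (if P (map A e) then 1 else 0) \<le> Val P E w A" unfolding Val_def
        by (rule member_le_sum[OF eE _ fE]) (use wpos in \<open>auto intro: less_imp_le\<close>)
      hence "w e \<le> Val P E w A" using mt t(3) by simp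
      hence Vpos: "Val P E w A > 0" using wpos[OF eE] by simp
      have "Val P E\<epsilon> w\<epsilon> A = 0" unfolding Val_def
      proof (rule sum.neutral, intro ballI)
        fix e' assume e'E: "e' \<in> E\<epsilon>"
        hence e'E': "e' \<in> E" using sub by auto
        have le': "length e' = k" and de': "distinct e'" using Ee[OF e'E'] by auto
        have "\<not> set e' \<subseteq> set e"
        proof
          assume "set e' \<subseteq> set e"
          moreover have "card (set e') = card (set e)" using le le' de de' by (simp add: distinct_card)
          ultimately have "set e' = set e" by (simp add: card_subset_eq)
          thus False using none e'E by blast
        qed
        then obtain v where v: "v \<in> set e'" "v \<notin> set e" by blast
        then obtain j where j: "j < k" "e' ! j = v" using le' by (metis in_set_conv_nth)
        have "\<not> P (map A e')"
          by (rule blocked[OF hz, of _ j]) (use le' j v Aout AD in auto)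
        thus "w\<epsilon> e' * (if P (map A e') then 1 else 0) = 0" by simp
      qed
      moreover have "(1 - \<epsilon>) * Val P E w A > 0" using Vpos H by simp
      ultimately show False using sp[of A] AD by simp
    qed
    have E_sub: "E \<subseteq> (\<Union>S\<in>set ` E\<epsilon>. permutations_of_set S)"
      using hit Ee unfolding permutations_of_set_def by fastforce
    have "card E \<le> card (\<Union>S\<in>set ` E\<epsilon>. permutations_of_set S)"
      by (rule card_mono[OF _ E_sub]) (use fEe in auto)
    also have "\<dots> \<le> (\<Sum>S\<in>set ` E\<epsilon>. card (permutations_of_set S))"
      by (rule card_UN_le) (use fEe in auto)
    also have "\<dots> = (\<Sum>S\<in>set ` E\<epsilon>. fact k)"
    proof (rule sum.cong[OF refl])
      fix S assume "S \<in> set ` E\<epsilon>"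
      then obtain e where "e \<in> E" "S = set e" using sub by auto
      then show "card (permutations_of_set S) = fact k" using Ee[of e] by (simp add: distinct_card)
    qed
    also have "\<dots> = card (set ` E\<epsilon>) * fact k" by simp
    also have "\<dots> \<le> card E\<epsilon> * fact k" by (simp add: card_image_le fEe)
    finally have "real (card E) \<le> real (card E\<epsilon>) * fact k"
      by (metis of_nat_fact of_nat_le_iff of_nat_mult)
    thus "1 / fact k * real (card E) \<le> real (card E\<epsilon>)"
      by (simp add: field_simps)
  qed
qed

end
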